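(* Let $K$ be a field of characteristic $0$, $e\ge2$, $A,B\in M_e(K)$ and $d\in(\mathbb{Z}/e\mathbb{Z})^\times$. Then $\mathrm{Char}_X(B\overset{d}{\ast}A)=\mathrm{Char}_X(A\overset{d^{-1}}{\ast}B)$, where $\mathrm{Char}_X$ denotes the characteristic polynomial.
   Context: For $A=[a_{i,j}],B=[b_{i,j}]\in M_e(K)$ (indices modulo $e$) and $d\in(\mathbb{Z}/e\mathbb{Z})\setminus\{0\}$, the $d$-composition is $A\overset{d}{\ast}B=\big[\sum_{s=0}^{e-1}\sum_{t=0}^{e-1}a_{s,t}b_{ds+i,dt+j}\big]_{0\le i,j\le e-1}$. *)

theory Defs
  imports "Jordan_Normal_Form.Char_Poly" "HOL-Number_Theory.Cong"
begin

text \<open>d-composition of two e x e matrices, indices taken modulo e;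
  d is a natural-number representative of a residue class mod e.\<close>
definition dcomp :: "nat \<Rightarrow> nat \<Rightarrow> 'a::comm_ring_1 mat \<Rightarrow> 'a mat \<Rightarrow> 'a mat" where
  "dcomp e d A B = mat e e (\<lambda>(i,j).
     \<Sum>s<e. \<Sum>t<e. A $$ (s,t) * B $$ ((d*s+i) mod e, (d*t+j) mod e))"

end

theory Submission imports Defs begin
lemma key:
  fixes e d d' s i :: nat
  assumes "[d * d' = 1] (mod e)" "s < e"
  shows "(d' * ((d*s+i) mod e) + (e - d'*i mod e) mod e) mod e = s"
proof -
  have e0: "e > 0" using assms(2) by simp
  have "[d' * ((d*s+i) mod e) + (e - d'*i mod e) mod e = d' * (d*s+i) + (e - d'*i mod e)] (mod e)"
    by (intro cong_add cong_mult cong_refl) (simp_all add: cong_def)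
  moreover have "d' * (d*s+i) + (e - d'*i mod e) = (d*d')*s + (d'*i + (e - d'*i mod e))"
    by (simp add: algebra_simps)
  moreover have "[d'*i + (e - d'*i mod e) = 0] (mod e)"
  proof -
    have "d'*i + (e - d'*i mod e) = (d'*i div e)*e + e"
      using e0 mod_less_divisor[OF e0, of "d'*i"] div_mult_mod_eq[of "d'*i" e] by linarith
    then show ?thesis by (simp add: cong_def)
  qed
  ultimately have "[d' * ((d*s+i) mod e) + (e - d'*i mod e) mod e = 1*s + 0] (mod e)"
    by (metis cong_add cong_mult cong_refl cong_trans assms(1))
  then show ?thesis using assms(2) by (simp add: cong_def)
qed
lemma sub_mod_inj: fixes a b e :: nat assumes "a < e" "b < e" "(e-a) mod e = (e-b) mod e" shows "a = b"
proof (cases "a = 0")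
  case True then show ?thesis using assms by (cases "b = 0") auto
next
  case False then show ?thesis using assms by (cases "b = 0") auto
qed
lemma delta_l: fixes f :: "nat \<Rightarrow> 'a::comm_ring_1" assumes "a < n"
  shows "(\<Sum>j\<in>{0..<n}. (if a = j then 1 else 0) * f j) = f a"
proof -
  have "(\<Sum>j\<in>{0..<n}. (if a = j then 1 else 0) * f j) = (\<Sum>j\<in>{0..<n}. if a = j then f j else 0)"
    by (rule sum.cong) auto
  then show ?thesis using assms by simp
qed
lemma delta_r: fixes f :: "nat \<Rightarrow> 'a::comm_ring_1" assumes "a < n"
  shows "(\<Sum>j\<in>{0..<n}. f j * (if a = j then 1 else 0)) = f a"
  using delta_l[OF assms, of f] by (simp add: mult.commute)
lemma perm_similar:
  fixes C D :: "'a::comm_ring_1 mat"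
  assumes C: "C \<in> carrier_mat n n" and D: "D \<in> carrier_mat n n"
    and bij: "bij_betw \<sigma> {..<n} {..<n}"
    and eq: "\<And>i j. i < n \<Longrightarrow> j < n \<Longrightarrow> C $$ (i,j) = D $$ (\<sigma> i, \<sigma> j)"
  shows "similar_mat C D"
proof -
  define P :: "'a mat" where "P = mat n n (\<lambda>(i,j). if \<sigma> i = j then 1 else 0)"
  define Q :: "'a mat" where "Q = mat n n (\<lambda>(i,j). if \<sigma> j = i then 1 else 0)"
  have inj: "inj_on \<sigma> {..<n}" and img: "\<sigma> ` {..<n} = {..<n}" using bij by (auto simp: bij_betw_def)
  have sl: "\<sigma> i < n" if "i < n" for i using img that by auto
  have PC: "P \<in> carrier_mat n n" "Q \<in> carrier_mat n n" by (auto simp: P_def Q_def)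
  have PD: "P * D = mat n n (\<lambda>(i,k). D $$ (\<sigma> i, k))"
  proof (rule eq_matI)
    fix i k assume "i < dim_row (mat n n (\<lambda>(i,k). D $$ (\<sigma> i, k)))" "k < dim_col (mat n n (\<lambda>(i,k). D $$ (\<sigma> i, k)))"
    then have ik: "i < n" "k < n" by auto
    have "(P * D) $$ (i,k) = (\<Sum>j\<in>{0..<n}. (if \<sigma> i = j then 1 else 0) * D $$ (j,k))"
      using ik D by (simp add: P_def scalar_prod_def)
    also have "\<dots> = D $$ (\<sigma> i, k)" using sl[OF ik(1)]
      by (rule delta_l)
    finally show "(P * D) $$ (i,k) = mat n n (\<lambda>(i,k). D $$ (\<sigma> i, k)) $$ (i,k)" using ik by simp
  qed (use D in \<open>auto simp: P_def\<close>)
  have PDQ: "C = P * D * Q"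
  proof (rule eq_matI)
    fix i l assume "i < dim_row (P * D * Q)" "l < dim_col (P * D * Q)"
    then have il: "i < n" "l < n" using PC by auto
    have "(P * D * Q) $$ (i,l) = (\<Sum>k\<in>{0..<n}. D $$ (\<sigma> i, k) * (if \<sigma> l = k then 1 else 0))"
      using il by (simp add: PD Q_def scalar_prod_def)
    also have "\<dots> = D $$ (\<sigma> i, \<sigma> l)" using sl[OF il(2)]
      by (rule delta_r)
    finally show "C $$ (i,l) = (P * D * Q) $$ (i,l)" using il eq by simp
  qed (use C PC in auto)
  have PQ: "P * Q = 1\<^sub>m n"
  proof (rule eq_matI)
    fix i l assume "i < dim_row (1\<^sub>m n :: 'a mat)" "l < dim_col (1\<^sub>m n :: 'a mat)"
    then have il: "i < n" "l < n" by auto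
    have "(P * Q) $$ (i,l) = (\<Sum>k\<in>{0..<n}. (if \<sigma> i = k then 1 else 0) * (if \<sigma> l = k then 1 else (0::'a)))"
      using il by (simp add: P_def Q_def scalar_prod_def)
    also have "\<dots> = (if \<sigma> l = \<sigma> i then 1 else 0)" using sl[OF il(1)]
      by (rule delta_l)
    also have "\<dots> = (if i = l then 1 else 0)" using inj il by (auto simp: inj_on_def)
    finally show "(P * Q) $$ (i,l) = 1\<^sub>m n $$ (i,l)" using il by simp
  qed (use PC in auto)
  have QP: "Q * P = 1\<^sub>m n"
  proof (rule eq_matI)
    fix i l assume "i < dim_row (1\<^sub>m n :: 'a mat)" "l < dim_col (1\<^sub>m n :: 'a mat)"
    then have il: "i < n" "l < n" by auto
    obtain k0 where k0: "k0 < n" "\<sigma> k0 = i" using img il by (metis imageE lessThan_iff)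
    have "(Q * P) $$ (i,l) = (\<Sum>k\<in>{0..<n}. (if \<sigma> k = i then 1 else 0) * (if \<sigma> k = l then 1 else (0::'a)))"
      using il by (simp add: P_def Q_def scalar_prod_def)
    also have "\<dots> = (\<Sum>k\<in>{0..<n}. if k = k0 then (if i = l then 1 else 0) else 0)"
    proof (rule sum.cong[OF refl])
      fix k assume "k \<in> {0..<n}"
      then show "(if \<sigma> k = i then 1 else 0) * (if \<sigma> k = l then 1 else (0::'a)) = (if k = k0 then (if i = l then 1 else 0) else 0)"
        using k0 inj by (auto simp: inj_on_def)
    qed
    also have "\<dots> = (if i = l then 1 else 0)" using k0 by simp
    finally show "(Q * P) $$ (i,l) = 1\<^sub>m n $$ (i,l)" using il by simp
  qed (use PC in auto)
  show ?thesis by (rule similar_matI[of C D P Q n]) (use C D PC PQ QP PDQ in auto)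
qed

lemma reidx:
  fixes e d d' i :: nat
  assumes "[d * d' = 1] (mod e)"
  shows "bij_betw (\<lambda>s. (d*s+i) mod e) {..<e} {..<e}"
proof -
  let ?g = "\<lambda>s. (d*s+i) mod e"
  have "inj_on ?g {..<e}"
  proof (rule inj_on_inverseI)
    fix s assume "s \<in> {..<e}"
    then show "(\<lambda>u. (d' * u + (e - d'*i mod e) mod e) mod e) (?g s) = s"
      using key[OF assms] by simp
  qed
  moreover have "?g ` {..<e} \<subseteq> {..<e}" by auto
  ultimately show ?thesis
    by (simp add: bij_betw_def endo_inj_surj)
qed

theorem corollary3p2:
  fixes A B :: "'a::field_char_0 mat" and e d d' :: nat
  assumes "e \<ge> 2"
    and "A \<in> carrier_mat e e" and "B \<in> carrier_mat e e"
    and "[d * d' = 1] (mod e)"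
  shows "char_poly (dcomp e d B A) = char_poly (dcomp e d' A B)"
proof -
  define \<sigma> where "\<sigma> i = (e - d'*i mod e) mod e" for i
  have e0: "e > 0" using assms(1) by simp
  have d'd: "[d' * d = 1] (mod e)" using assms(4) by (simp add: mult.commute)
  have bs: "bij_betw \<sigma> {..<e} {..<e}"
  proof -
    have "inj_on \<sigma> {..<e}"
    proof (rule inj_onI)
      fix x y assume xy: "x \<in> {..<e}" "y \<in> {..<e}" "\<sigma> x = \<sigma> y"
      have a: "d'*x mod e < e" "d'*y mod e < e" using e0 by auto
      have "d'*x mod e = d'*y mod e"
        using sub_mod_inj[OF a] xy(3) by (simp add: \<sigma>_def)
      then have "[d'*x = d'*y] (mod e)" by (simp add: cong_def)
      then have "[d*(d'*x) = d*(d'*y)] (mod e)" by (rule cong_scalar_left)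
      then have "[(d*d')*x = (d*d')*y] (mod e)" by (simp add: mult.assoc)
      then have "[1*x = 1*y] (mod e)" by (meson assms(4) cong_mult cong_refl cong_sym cong_trans)
      then show "x = y" using xy by (simp add: cong_def)
    qed
    moreover have "\<sigma> ` {..<e} \<subseteq> {..<e}" using e0 by (auto simp: \<sigma>_def)
    ultimately show ?thesis by (simp add: bij_betw_def endo_inj_surj)
  qed
  show ?thesis
  proof (rule char_poly_similar, rule perm_similar[of _ e _ \<sigma>])
    show "bij_betw \<sigma> {..<e} {..<e}" by (rule bs)
  next
    fix i j assume ij: "i < e" "j < e"
    have si: "\<sigma> i < e" "\<sigma> j < e" using e0 by (auto simp: \<sigma>_def)
    have "dcomp e d B A $$ (i,j) = (\<Sum>s<e. \<Sum>t<e. B $$ (s,t) * A $$ ((d*s+i) mod e, (d*t+j) mod e))"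
      using ij by (simp add: dcomp_def)
    also have "\<dots> = (\<Sum>s<e. \<Sum>t<e. A $$ ((d*s+i) mod e, (d*t+j) mod e) *
        B $$ ((d' * ((d*s+i) mod e) + \<sigma> i) mod e, (d' * ((d*t+j) mod e) + \<sigma> j) mod e))"
      unfolding \<sigma>_def
      by (intro sum.cong refl, subst key[OF assms(4)], simp, subst key[OF assms(4)], simp, simp add: mult.commute)
    also have "\<dots> = (\<Sum>u<e. \<Sum>v<e. A $$ (u, v) *
        B $$ ((d' * u + \<sigma> i) mod e, (d' * v + \<sigma> j) mod e))"
    proof -
      have "(\<Sum>s<e. \<Sum>t<e. A $$ ((d*s+i) mod e, (d*t+j) mod e) *
        B $$ ((d' * ((d*s+i) mod e) + \<sigma> i) mod e, (d' * ((d*t+j) mod e) + \<sigma> j) mod e))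
        = (\<Sum>s<e. \<Sum>v<e. A $$ ((d*s+i) mod e, v) *
        B $$ ((d' * ((d*s+i) mod e) + \<sigma> i) mod e, (d' * v + \<sigma> j) mod e))"
      proof (rule sum.cong[OF refl])
        fix s assume "s \<in> {..<e}"
        let ?u = "(d*s+i) mod e"
        show "(\<Sum>t<e. A $$ (?u, (d*t+j) mod e) *
          B $$ ((d' * ?u + \<sigma> i) mod e, (d' * ((d*t+j) mod e) + \<sigma> j) mod e))
          = (\<Sum>v<e. A $$ (?u, v) * B $$ ((d' * ?u + \<sigma> i) mod e, (d' * v + \<sigma> j) mod e))"
          by (rule sum.reindex_bij_betw[OF reidx[OF assms(4)], of "\<lambda>v. A $$ (?u, v) * B $$ ((d' * ?u + \<sigma> i) mod e, (d' * v + \<sigma> j) mod e)"])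
      qed
      also have "\<dots> = (\<Sum>u<e. \<Sum>v<e. A $$ (u, v) *
        B $$ ((d' * u + \<sigma> i) mod e, (d' * v + \<sigma> j) mod e))"
        by (rule sum.reindex_bij_betw[OF reidx[OF assms(4)], of "\<lambda>u. \<Sum>v<e. A $$ (u, v) * B $$ ((d' * u + \<sigma> i) mod e, (d' * v + \<sigma> j) mod e)"])
      finally show ?thesis .
    qed
    also have "\<dots> = dcomp e d' A B $$ (\<sigma> i, \<sigma> j)"
      using si by (simp add: dcomp_def)
    finally show "dcomp e d B A $$ (i,j) = dcomp e d' A B $$ (\<sigma> i, \<sigma> j)" .
  qed (auto simp: dcomp_def)
qed
end
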